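(* For every $(0,1)$-matrix $A$ of size $n\times n$ and every $k\in\mathbb N$, \[\mathrm{pdet}(A,k)=\sum_{W\in\mathcal W_{G_A,k}}\mathrm{sign}(W)\cdot\mathrm{wt}(W).\]
   Context: For $n>0$ let $S_n$ be the set of permutations of $\{1,\dots,n\}$ and $S_{n,k}=\{\pi\in S_n: |\{i:\pi(i)\ne i\}|=k\}$. For an $n\times n$ matrix $A=(a_{i,j})$, $\mathrm{pdet}(A,k)=\sum_{\pi\in S_{n,k}}\mathrm{sign}(\pi)\prod_{i:\pi(i)\ne i}a_{i,\pi(i)}$. $G_A$ is the weighted directed graph on vertex set $\{1,\dots,n\}$ with weighted adjacency matrix $A$. A clow in a directed graph $G$ on $\{1,\dots,n\}$ is a walk $C=(w_1,\dots,w_{r-1},w_r=w_1)$ such that $w_1$ is the minimum of $w_1,\dots,w_{r-1}$ and $w_1\ne w_j$ for all $1<j<r$; $w_1$ is its head $\mathrm{head}(C)$. A $k$-clow sequence is a sequence $W=(C_1,\dots,C_{r'})$ of clows with $\mathrm{head}(C_1)<\dots<\mathrm{head}(C_{r'})$, such that the total number of edges in the clows (with multiplicity) is exactly $k$, every clow has at least two edges, and no self-loop $(i,i)$ occurs in any clow. $\mathcal W_{G,k}$ is the set of all $k$-clow sequences of $G$. For $W\in\mathcal W_{G,k}$ with $r'$ clows, $\mathrm{sign}(W)=(-1)^{2n-k+r'}$. $\mathrm{wt}(W)$ is the product of the weights of all edges of all clows of $W$ (with multiplicity). *)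

theory Defs
  imports "HOL-Combinatorics.Permutations"
begin

text \<open>Matrices are n x n, indexed by 1..n, represented as functions nat => nat => int.
  The weighted digraph G_A has vertex set 1..n, an edge (i,j) iff A i j \<noteq> 0, of weight A i j.\<close>

definition S_nk :: "nat \<Rightarrow> nat \<Rightarrow> (nat \<Rightarrow> nat) set" where
  "S_nk n k = {\<pi>. \<pi> permutes {1..n} \<and> card {i \<in> {1..n}. \<pi> i \<noteq> i} = k}"

definition pdet :: "nat \<Rightarrow> (nat \<Rightarrow> nat \<Rightarrow> int) \<Rightarrow> nat \<Rightarrow> int" where
  "pdet n A k = (\<Sum>\<pi>\<in>S_nk n k. sign \<pi> * (\<Prod>i\<in>{i \<in> {1..n}. \<pi> i \<noteq> i}. A i (\<pi> i)))"

definition is_edge :: "(nat \<Rightarrow> nat \<Rightarrow> int) \<Rightarrow> nat \<Rightarrow> nat \<Rightarrow> bool" where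
  "is_edge A i j \<longleftrightarrow> A i j \<noteq> 0"

text \<open>A walk is represented by its full vertex list [w_1, ..., w_r]; its edges (with multiplicity)
  are the consecutive pairs.\<close>
definition walk_edges :: "nat list \<Rightarrow> (nat \<times> nat) list" where
  "walk_edges C = zip C (tl C)"

definition is_walk :: "nat \<Rightarrow> (nat \<Rightarrow> nat \<Rightarrow> int) \<Rightarrow> nat list \<Rightarrow> bool" where
  "is_walk n A C \<longleftrightarrow> C \<noteq> [] \<and> set C \<subseteq> {1..n} \<and>
     (\<forall>(a, b) \<in> set (walk_edges C). is_edge A a b)"

definition is_clow :: "nat \<Rightarrow> (nat \<Rightarrow> nat \<Rightarrow> int) \<Rightarrow> nat list \<Rightarrow> bool" where
  "is_clow n A C \<longleftrightarrow> is_walk n A C \<and> length C \<ge> 2 \<and> last C = hd C \<and>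
     hd C = Min (set (butlast C)) \<and>
     (\<forall>j. 0 < j \<and> j < length C - 1 \<longrightarrow> C ! j \<noteq> hd C)"

definition head :: "nat list \<Rightarrow> nat" where
  "head C = hd C"

definition num_edges :: "nat list \<Rightarrow> nat" where
  "num_edges C = length (walk_edges C)"

definition clow_seqs :: "nat \<Rightarrow> (nat \<Rightarrow> nat \<Rightarrow> int) \<Rightarrow> nat \<Rightarrow> nat list list set" where
  "clow_seqs n A k = {W. (\<forall>C \<in> set W. is_clow n A C \<and> num_edges C \<ge> 2 \<and>
                              (\<forall>(a, b) \<in> set (walk_edges C). a \<noteq> b)) \<and>
                         sorted_wrt (<) (map head W) \<and>
                         sum_list (map num_edges W) = k}"

text \<open>sign(W) = (-1)^(2n - k + r'), exponent taken in the integers.\<close>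
definition clow_seq_sign :: "nat \<Rightarrow> nat \<Rightarrow> nat list list \<Rightarrow> int" where
  "clow_seq_sign n k W = (if even (2 * int n - int k + int (length W)) then 1 else -1)"

definition clow_seq_wt :: "(nat \<Rightarrow> nat \<Rightarrow> int) \<Rightarrow> nat list list \<Rightarrow> int" where
  "clow_seq_wt A W = prod_list (map (\<lambda>C. prod_list (map (\<lambda>(a, b). A a b) (walk_edges C))) W)"

end

theory Submission
  imports Defs "HOL-Computational_Algebra.Formal_Power_Series"
begin


definition detU :: "nat set \<Rightarrow> (nat \<Rightarrow> nat \<Rightarrow> 'a::comm_ring_1) \<Rightarrow> 'a" where
  "detU U M = (\<Sum>\<sigma>\<in>{\<sigma>. \<sigma> permutes U}. of_int (sign \<sigma>) * (\<Prod>x\<in>U. M x (\<sigma> x)))"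

lemma rowrep_zero:
  fixes M :: "nat \<Rightarrow> nat \<Rightarrow> 'a::{idom,semiring_char_0}"
  assumes fin: "finite U" and l: "l \<in> U" and i: "i \<in> U" and ne: "i \<noteq> l"
  shows "(\<Sum>\<sigma>\<in>{\<sigma>. \<sigma> permutes U}. of_int (sign \<sigma>) * M l (\<sigma> i) * (\<Prod>x\<in>U-{i}. M x (\<sigma> x))) = 0"
proof -
  let ?t = "transpose i l"
  define f where "f \<sigma> = of_int (sign \<sigma>) * M l (\<sigma> i) * (\<Prod>x\<in>U-{i}. M x (\<sigma> x))" for \<sigma>
  have t: "?t permutes U" using i l by (simp add: permutes_swap_id)
  have key: "f (\<sigma> \<circ> ?t) = - f \<sigma>" if s: "\<sigma> permutes U" for \<sigma>
  proof -
    have sg: "sign (\<sigma> \<circ> ?t) = - sign \<sigma>"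
      using sign_compose[OF permutes_imp_permutation[OF fin s] permutes_imp_permutation[OF fin t]]
        sign_swap_id[of i l] ne by simp
    have lU: "l \<in> U - {i}" using l ne by simp
    have p1: "(\<Prod>x\<in>U-{i}. M x (\<sigma> x)) = M l (\<sigma> l) * (\<Prod>x\<in>U-{i}-{l}. M x (\<sigma> x))"
      using prod.remove[OF _ lU] fin by simp
    have p2: "(\<Prod>x\<in>U-{i}. M x ((\<sigma> \<circ> ?t) x)) = M l (\<sigma> i) * (\<Prod>x\<in>U-{i}-{l}. M x (\<sigma> x))"
    proof -
      have "(\<Prod>x\<in>U-{i}. M x ((\<sigma> \<circ> ?t) x)) = M l ((\<sigma> \<circ> ?t) l) * (\<Prod>x\<in>U-{i}-{l}. M x ((\<sigma> \<circ> ?t) x))"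
        by (rule prod.remove) (use fin lU in auto)
      also have "(\<Prod>x\<in>U-{i}-{l}. M x ((\<sigma> \<circ> ?t) x)) = (\<Prod>x\<in>U-{i}-{l}. M x (\<sigma> x))"
        by (rule prod.cong) (auto simp: transpose_def)
      finally show ?thesis by simp
    qed
    show ?thesis unfolding f_def sg p1 p2 by (simp add: transpose_def)
  qed
  have "sum f {\<sigma>. \<sigma> permutes U} = sum (\<lambda>\<sigma>. f (\<sigma> \<circ> ?t)) {\<sigma>. \<sigma> permutes U}"
    by (rule sum_permutations_compose_right[OF t])
  also have "\<dots> = - sum f {\<sigma>. \<sigma> permutes U}"
    by (simp add: key sum_negf)
  finally have "sum f {\<sigma>. \<sigma> permutes U} + sum f {\<sigma>. \<sigma> permutes U} = 0" by simp
  then have "2 * sum f {\<sigma>. \<sigma> permutes U} = 0" by (metis mult_2)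
  then show ?thesis unfolding f_def by simp
qed

lemma rowrep_same:
  fixes M :: "nat \<Rightarrow> nat \<Rightarrow> 'a::comm_ring_1"
  assumes fin: "finite U" and i: "i \<in> U"
  shows "(\<Sum>\<sigma>\<in>{\<sigma>. \<sigma> permutes U}. of_int (sign \<sigma>) * M i (\<sigma> i) * (\<Prod>x\<in>U-{i}. M x (\<sigma> x))) = detU U M"
  unfolding detU_def
  by (rule sum.cong) (auto simp: prod.remove[OF fin i] mult.assoc)

definition Lf :: "nat set \<Rightarrow> (nat \<Rightarrow> nat \<Rightarrow> 'a::comm_ring_1) \<Rightarrow> (nat \<Rightarrow> 'a) \<Rightarrow> nat \<Rightarrow> 'a" where
  "Lf U M b l = (\<Sum>\<sigma>\<in>{\<sigma>. \<sigma> permutes U}. \<Sum>i\<in>U. if \<sigma> i = l then of_int (sign \<sigma>) * b i * (\<Prod>x\<in>U-{i}. M x (\<sigma> x)) else 0)"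

lemma Lf_eq:
  fixes M :: "nat \<Rightarrow> nat \<Rightarrow> 'a::{idom,semiring_char_0}"
  assumes fin: "finite U" and l: "l \<in> U"
  shows "(\<Sum>l'\<in>U. M l l' * Lf U M b l') = detU U M * b l"
proof -
  have "(\<Sum>l'\<in>U. M l l' * Lf U M b l') =
     (\<Sum>l'\<in>U. \<Sum>\<sigma>\<in>{\<sigma>. \<sigma> permutes U}. \<Sum>i\<in>U. M l l' * (if \<sigma> i = l' then of_int (sign \<sigma>) * b i * (\<Prod>x\<in>U-{i}. M x (\<sigma> x)) else 0))"
    by (simp only: Lf_def sum_distrib_left)
  also have "\<dots> = (\<Sum>\<sigma>\<in>{\<sigma>. \<sigma> permutes U}. \<Sum>l'\<in>U. \<Sum>i\<in>U. M l l' * (if \<sigma> i = l' then of_int (sign \<sigma>) * b i * (\<Prod>x\<in>U-{i}. M x (\<sigma> x)) else 0))"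
    by (rule sum.swap)
  also have "\<dots> = 
     (\<Sum>\<sigma>\<in>{\<sigma>. \<sigma> permutes U}. \<Sum>i\<in>U. \<Sum>l'\<in>U. M l l' * (if \<sigma> i = l' then of_int (sign \<sigma>) * b i * (\<Prod>x\<in>U-{i}. M x (\<sigma> x)) else 0))"
    by (rule sum.cong[OF refl], rule sum.swap)
  also have "\<dots> = (\<Sum>\<sigma>\<in>{\<sigma>. \<sigma> permutes U}. \<Sum>i\<in>U. b i * (of_int (sign \<sigma>) * M l (\<sigma> i) * (\<Prod>x\<in>U-{i}. M x (\<sigma> x))))"
  proof (rule sum.cong[OF refl], rule sum.cong[OF refl])
    fix \<sigma> i assume s: "\<sigma> \<in> {\<sigma>. \<sigma> permutes U}" and i: "i \<in> U"
    have "\<sigma> i \<in> U" using s i by (simp add: permutes_in_image)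
    then show "(\<Sum>l'\<in>U. M l l' * (if \<sigma> i = l' then of_int (sign \<sigma>) * b i * (\<Prod>x\<in>U-{i}. M x (\<sigma> x)) else 0))
       = b i * (of_int (sign \<sigma>) * M l (\<sigma> i) * (\<Prod>x\<in>U-{i}. M x (\<sigma> x)))"
    proof -
      have "(\<Sum>l'\<in>U. M l l' * (if \<sigma> i = l' then of_int (sign \<sigma>) * b i * (\<Prod>x\<in>U-{i}. M x (\<sigma> x)) else 0))
        = (\<Sum>l'\<in>U. if \<sigma> i = l' then M l l' * (of_int (sign \<sigma>) * b i * (\<Prod>x\<in>U-{i}. M x (\<sigma> x))) else 0)"
        by (rule sum.cong) auto
      also have "\<dots> = M l (\<sigma> i) * (of_int (sign \<sigma>) * b i * (\<Prod>x\<in>U-{i}. M x (\<sigma> x)))"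
        using \<open>\<sigma> i \<in> U\<close> by (simp only: sum.delta'[OF fin] if_True)
      finally show ?thesis by (simp only: mult_ac)
    qed
  qed
  also have "\<dots> = (\<Sum>i\<in>U. b i * (\<Sum>\<sigma>\<in>{\<sigma>. \<sigma> permutes U}. of_int (sign \<sigma>) * M l (\<sigma> i) * (\<Prod>x\<in>U-{i}. M x (\<sigma> x))))"
    by (simp only: sum_distrib_left, rule sum.swap)
  also have "\<dots> = (\<Sum>i\<in>U. if i = l then b i * detU U M else 0)"
    by (rule sum.cong) (auto simp: rowrep_same[OF fin] rowrep_zero[OF fin l])
  also have "\<dots> = detU U M * b l" using fin l by (simp add: mult.commute)
  finally show ?thesis .
qed

definition MA :: "(nat \<Rightarrow> nat \<Rightarrow> int) \<Rightarrow> nat \<Rightarrow> nat \<Rightarrow> int fps" where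
  "MA A x y = (if x = y then 1 else fps_const (A x y) * fps_X)"

definition BA :: "(nat \<Rightarrow> nat \<Rightarrow> int) \<Rightarrow> nat \<Rightarrow> nat \<Rightarrow> int" where
  "BA A x y = (if x = y then 0 else A x y)"

fun Wk :: "nat set \<Rightarrow> (nat \<Rightarrow> nat \<Rightarrow> int) \<Rightarrow> (nat \<Rightarrow> int) \<Rightarrow> nat \<Rightarrow> nat \<Rightarrow> int" where
  "Wk U B b 0 l = b l"
| "Wk U B b (Suc p) l = (\<Sum>l'\<in>U. B l l' * Wk U B b p l')"

lemma MA_exp: "MA A l l' = (if l = l' then 1 else 0) + fps_X * fps_const (BA A l l')"
  by (simp add: MA_def BA_def mult.commute)

lemma Lf_solution:
  assumes fin: "finite U" and l: "l \<in> U"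
  shows "Lf U (MA A) (\<lambda>i. fps_const (b i)) l = detU U (MA A) * Abs_fps (\<lambda>p. (-1)^p * Wk U (BA A) b p l)"
proof -
  define D where "D = detU U (MA A)"
  define H where "H l = Abs_fps (\<lambda>p. (-1)^p * Wk U (BA A) b p l)" for l
  define L where "L l = Lf U (MA A) (\<lambda>i. fps_const (b i)) l" for l
  define Z where "Z l = L l - D * H l" for l
  have rowL: "L l + fps_X * (\<Sum>l'\<in>U. fps_const (BA A l l') * L l') = D * fps_const (b l)" if l: "l \<in> U" for l
  proof -
    have "(\<Sum>l'\<in>U. MA A l l' * L l') = D * fps_const (b l)"
      unfolding L_def D_def by (rule Lf_eq[OF fin l])
    moreover have "(\<Sum>l'\<in>U. MA A l l' * L l') = L l + fps_X * (\<Sum>l'\<in>U. fps_const (BA A l l') * L l')"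
      unfolding MA_exp distrib_right sum.distrib
      by (simp add: sum_distrib_left if_distrib[of "\<lambda>x. x * _"] fin l mult.assoc cong: if_cong)
    ultimately show ?thesis by simp
  qed
  have rowH: "H l + fps_X * (\<Sum>l'\<in>U. fps_const (BA A l l') * H l') = fps_const (b l)" for l
  proof (rule fps_ext)
    fix n show "fps_nth (H l + fps_X * (\<Sum>l'\<in>U. fps_const (BA A l l') * H l')) n = fps_nth (fps_const (b l)) n"
    proof (cases n)
      case 0 then show ?thesis by (simp add: H_def)
    next
      case (Suc m)
      then show ?thesis
        by (simp add: H_def fps_sum_nth sum_distrib_left mult_ac sum_negf)
    qed
  qed
  have rowZ: "Z l + fps_X * (\<Sum>l'\<in>U. fps_const (BA A l l') * Z l') = 0" if l: "l \<in> U" for l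
  proof -
    have "Z l + fps_X * (\<Sum>l'\<in>U. fps_const (BA A l l') * Z l') =
      (L l + fps_X * (\<Sum>l'\<in>U. fps_const (BA A l l') * L l')) - D * (H l + fps_X * (\<Sum>l'\<in>U. fps_const (BA A l l') * H l'))"
      unfolding Z_def by (simp add: algebra_simps sum_subtractf sum_distrib_left)
    also have "\<dots> = 0" using rowL[OF l] rowH[of l] by simp
    finally show ?thesis .
  qed
  have "\<forall>l\<in>U. fps_nth (Z l) m = 0" for m
  proof (induction m rule: less_induct)
    case (less m)
    show ?case
    proof
      fix l assume l: "l \<in> U"
      have "fps_nth (Z l + fps_X * (\<Sum>l'\<in>U. fps_const (BA A l l') * Z l')) m = 0"
        using rowZ[OF l] by simp
      moreover have "m > 0 \<Longrightarrow> fps_nth (\<Sum>l'\<in>U. fps_const (BA A l l') * Z l') (m - 1) = 0"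
        using less by (simp add: fps_sum_nth)
      ultimately show "fps_nth (Z l) m = 0" by (cases "m = 0") auto
    qed
  qed
  then have "Z l = 0" using l by (intro fps_ext) simp
  then show ?thesis unfolding Z_def L_def D_def H_def by simp
qed

lemma det_insert:
  assumes fin: "finite U" and h: "h \<notin> U"
  shows "detU (insert h U) (MA A) = detU U (MA A) -
     fps_X^2 * (\<Sum>j\<in>U. fps_const (A h j) * Lf U (MA A) (\<lambda>i. fps_const (A i h)) j)"
proof -
  define f where "f \<sigma> = of_int (sign \<sigma>) * (\<Prod>x\<in>insert h U. MA A x (\<sigma> x))" for \<sigma>
  have id_term: "(\<Sum>q\<in>{p. p permutes U}. f (transpose h h \<circ> q)) = detU U (MA A)"
    unfolding detU_def f_def
  proof (intro sum.cong refl)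
    fix q assume "q \<in> {p. p permutes U}"
    then have "q h = h" using h by (simp add: permutes_not_in)
    then show "of_int (sign (transpose h h \<circ> q)) * (\<Prod>x\<in>insert h U. MA A x ((transpose h h \<circ> q) x)) =
      of_int (sign q) * (\<Prod>x\<in>U. MA A x (q x))" using fin h by (simp add: MA_def)
  qed
  have jterm: "f (transpose h j \<circ> q) = - (fps_X ^ 2) * (fps_const (A h j) *
      (\<Sum>i\<in>U. if q i = j then of_int (sign q) * fps_const (A i h) * (\<Prod>x\<in>U-{i}. MA A x (q x)) else 0))"
    if j: "j \<in> U" and q: "q permutes U" for j q
  proof -
    define i0 where "i0 = inv q j"
    have i0U: "i0 \<in> U" unfolding i0_def using q j by (simp add: permutes_in_image permutes_inv)
    have qi0: "q i0 = j" unfolding i0_def using q by (simp add: permutes_inverses(1))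
    have qeq: "\<And>i. i \<in> U \<Longrightarrow> q i = j \<longleftrightarrow> i = i0"
      using q qi0 by (metis permutes_inverses(2))
    have hj: "h \<noteq> j" using h j by auto
    have sumi: "(\<Sum>i\<in>U. if q i = j then of_int (sign q) * fps_const (A i h) * (\<Prod>x\<in>U-{i}. MA A x (q x)) else 0)
       = of_int (sign q) * fps_const (A i0 h) * (\<Prod>x\<in>U-{i0}. MA A x (q x))"
    proof -
      have "(\<Sum>i\<in>U. if q i = j then of_int (sign q) * fps_const (A i h) * (\<Prod>x\<in>U-{i}. MA A x (q x)) else 0)
        = (\<Sum>i\<in>U. if i = i0 then of_int (sign q) * fps_const (A i h) * (\<Prod>x\<in>U-{i}. MA A x (q x)) else 0)"
        by (rule sum.cong) (auto simp: qeq)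
      also have "\<dots> = of_int (sign q) * fps_const (A i0 h) * (\<Prod>x\<in>U-{i0}. MA A x (q x))"
        using i0U fin by (simp only: sum.delta[OF fin] if_True)
      finally show ?thesis .
    qed
    have sg: "sign (transpose h j \<circ> q) = - sign q"
      using sign_compose[OF permutation_swap_id permutes_imp_permutation[OF fin q]] sign_swap_id[of h j] hj
      by simp
    have qh: "q h = h" using q h by (simp add: permutes_not_in)
    have "(\<Prod>x\<in>insert h U. MA A x ((transpose h j \<circ> q) x)) =
        MA A h j * (\<Prod>x\<in>U. MA A x (transpose h j (q x)))"
      using fin h qh by simp
    also have "(\<Prod>x\<in>U. MA A x (transpose h j (q x))) = MA A i0 h * (\<Prod>x\<in>U-{i0}. MA A x (transpose h j (q x)))"
      using prod.remove[OF fin i0U, of "\<lambda>x. MA A x (transpose h j (q x))"] qi0 by simp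
    also have "(\<Prod>x\<in>U-{i0}. MA A x (transpose h j (q x))) = (\<Prod>x\<in>U-{i0}. MA A x (q x))"
    proof (rule prod.cong[OF refl])
      fix x assume x: "x \<in> U - {i0}"
      then have "q x \<noteq> j" using qeq by auto
      moreover have "q x \<noteq> h" using x q h by (metis DiffD1 permutes_in_image)
      ultimately show "MA A x (transpose h j (q x)) = MA A x (q x)" by simp
    qed
    finally have pr: "(\<Prod>x\<in>insert h U. MA A x ((transpose h j \<circ> q) x)) =
       MA A h j * (MA A i0 h * (\<Prod>x\<in>U-{i0}. MA A x (q x)))" .
    have i0h: "i0 \<noteq> h" using i0U h by auto
    show ?thesis unfolding f_def sg pr sumi using hj i0h
      by (simp add: MA_def power2_eq_square mult_ac)
  qed
  have "detU (insert h U) (MA A) = sum f {p. p permutes insert h U}"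
    unfolding detU_def f_def by simp
  also have "\<dots> = (\<Sum>b\<in>insert h U. \<Sum>q\<in>{p. p permutes U}. f (transpose h b \<circ> q))"
    by (rule sum_over_permutations_insert[OF fin h])
  also have "\<dots> = detU U (MA A) + (\<Sum>j\<in>U. \<Sum>q\<in>{p. p permutes U}. f (transpose h j \<circ> q))"
    using fin h id_term by simp
  also have "(\<Sum>j\<in>U. \<Sum>q\<in>{p. p permutes U}. f (transpose h j \<circ> q)) =
     (\<Sum>j\<in>U. - (fps_X ^ 2) * (fps_const (A h j) * Lf U (MA A) (\<lambda>i. fps_const (A i h)) j))"
  proof (rule sum.cong[OF refl])
    fix j assume j: "j \<in> U"
    have "(\<Sum>q\<in>{p. p permutes U}. f (transpose h j \<circ> q)) =
      (\<Sum>q\<in>{p. p permutes U}. - (fps_X ^ 2) * (fps_const (A h j) *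
      (\<Sum>i\<in>U. if q i = j then of_int (sign q) * fps_const (A i h) * (\<Prod>x\<in>U-{i}. MA A x (q x)) else 0)))"
      by (rule sum.cong[OF refl]) (use jterm j in auto)
    also have "\<dots> = - (fps_X ^ 2) * (fps_const (A h j) * Lf U (MA A) (\<lambda>i. fps_const (A i h)) j)"
      unfolding Lf_def sum_distrib_left by simp
    finally show "(\<Sum>q\<in>{p. p permutes U}. f (transpose h j \<circ> q)) = - (fps_X ^ 2) * (fps_const (A h j) * Lf U (MA A) (\<lambda>i. fps_const (A i h)) j)" .
  qed
  finally show ?thesis by (simp add: sum_distrib_left sum_negf)
qed



fun pw :: "(nat \<Rightarrow> nat \<Rightarrow> int) \<Rightarrow> nat list \<Rightarrow> int" where
  "pw B (x # y # ys) = B x y * pw B (y # ys)"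
| "pw B _ = 1"

fun consec :: "(nat \<Rightarrow> nat \<Rightarrow> bool) \<Rightarrow> nat list \<Rightarrow> bool" where
  "consec P (x # y # ys) = (P x y \<and> consec P (y # ys))"
| "consec P _ = True"

lemma walk_edges_simps [simp]:
  "walk_edges [] = []" "walk_edges [x] = []" "walk_edges (x # y # ys) = (x, y) # walk_edges (y # ys)"
  by (simp_all add: walk_edges_def)

lemma pw_walk: "prod_list (map (\<lambda>(a, b). B a b) (walk_edges xs)) = pw B xs"
  by (induction B xs rule: pw.induct) auto

lemma consec_walk: "(\<forall>(a, b) \<in> set (walk_edges xs). P a b) \<longleftrightarrow> consec P xs"
  by (induction P xs rule: consec.induct) auto

lemma pw_nz: "pw B xs \<noteq> 0 \<longleftrightarrow> consec (\<lambda>a b. B a b \<noteq> 0) xs"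
  by (induction B xs rule: pw.induct) auto

lemma consec_conj: "consec (\<lambda>a b. P a b \<and> Q a b) xs \<longleftrightarrow> consec P xs \<and> consec Q xs"
  by (induction P xs rule: consec.induct) auto

lemma pw_cong: "consec (\<lambda>a b. B a b = B' a b) xs \<Longrightarrow> pw B xs = pw B' xs"
  by (induction B xs rule: pw.induct) auto

lemma consec_snoc: "consec P (xs @ [y]) = (if xs = [] then True else consec P xs \<and> P (last xs) y)"
  by (induction P xs rule: consec.induct) auto

lemma pw_snoc: "pw B (xs @ [y]) = (if xs = [] then 1 else pw B xs * B (last xs) y)"
  by (induction B xs rule: pw.induct) auto

lemma consec_Cons: "consec P (x # xs) = (if xs = [] then True else P x (hd xs) \<and> consec P xs)"
  by (cases xs) auto

lemma pw_Cons: "pw B (x # xs) = (if xs = [] then 1 else B x (hd xs) * pw B xs)"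
  by (cases xs) auto

lemma lists_Suc_image:
  "{vs. set vs \<subseteq> U \<and> length vs = Suc p} = (\<lambda>(x, vs). x # vs) ` (U \<times> {vs. set vs \<subseteq> U \<and> length vs = p})"
  by (auto simp: length_Suc_conv image_iff)

lemma finite_lists_eq: "finite U \<Longrightarrow> finite {vs. set vs \<subseteq> U \<and> length vs = p}"
  using finite_lists_length_eq by blast

lemma sum_lists_Suc:
  assumes "finite U"
  shows "(\<Sum>vs\<in>{vs. set vs \<subseteq> U \<and> length vs = Suc p}. g vs) =
     (\<Sum>x\<in>U. \<Sum>vs\<in>{vs. set vs \<subseteq> U \<and> length vs = p}. g (x # vs))"
proof -
  have inj: "inj_on (\<lambda>(x, vs). x # vs) (U \<times> {vs. set vs \<subseteq> U \<and> length vs = p})"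
    by (auto simp: inj_on_def)
  show ?thesis
    unfolding lists_Suc_image sum.reindex[OF inj]
    by (simp add: sum.cartesian_product split_def)
qed

lemma Wk_lists:
  assumes "finite U"
  shows "Wk U B b p l = (\<Sum>vs\<in>{vs. set vs \<subseteq> U \<and> length vs = p}. pw B (l # vs) * b (last (l # vs)))"
proof (induction p arbitrary: l)
  case 0
  have "{vs. set vs \<subseteq> U \<and> length vs = 0} = {[]}" by auto
  then show ?case by simp
next
  case (Suc p)
  show ?case
    unfolding sum_lists_Suc[OF assms] Wk.simps Suc
    by (simp add: sum_distrib_left mult.assoc)
qed

lemma consec_mono: "consec P xs \<Longrightarrow> (\<And>a b. P a b \<Longrightarrow> Q a b) \<Longrightarrow> consec Q xs"
  by (induction P xs rule: consec.induct) auto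

definition goodc :: "nat \<Rightarrow> (nat \<Rightarrow> nat \<Rightarrow> int) \<Rightarrow> nat list \<Rightarrow> bool" where
  "goodc n A C \<longleftrightarrow> is_clow n A C \<and> num_edges C \<ge> 2 \<and> (\<forall>(a, b) \<in> set (walk_edges C). a \<noteq> b)"

definition clows_at :: "nat \<Rightarrow> (nat \<Rightarrow> nat \<Rightarrow> int) \<Rightarrow> nat \<Rightarrow> nat \<Rightarrow> nat list set" where
  "clows_at n A h m = {C. goodc n A C \<and> head C = h \<and> num_edges C = m}"

lemma num_edges_len: "num_edges C = length C - 1"
  by (simp add: num_edges_def walk_edges_def)

lemma BA_nz: "BA A a b \<noteq> 0 \<longleftrightarrow> a \<noteq> b \<and> is_edge A a b"
  by (auto simp: BA_def is_edge_def)

lemma clows_at_char: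
  assumes h1: "1 \<le> h" and hn: "h \<le> n" and m: "2 \<le> m"
  shows "C \<in> clows_at n A h m \<longleftrightarrow>
    (\<exists>us. C = h # us @ [h] \<and> set us \<subseteq> {Suc h..n} \<and> length us = m - 1 \<and> pw (BA A) C \<noteq> 0)"
proof
  assume C: "C \<in> clows_at n A h m"
  then have cl: "is_clow n A C" and ne: "num_edges C = m" and hd: "hd C = h"
    and dist: "\<forall>(a, b) \<in> set (walk_edges C). a \<noteq> b"
    by (auto simp: clows_at_def goodc_def head_def)
  have len: "length C = m + 1" using ne m by (simp add: num_edges_len)
  have lastC: "last C = h" using cl hd by (simp add: is_clow_def)
  define us where "us = butlast (tl C)"
  have Ceq: "C = h # us @ [h]"
  proof -
    have "C \<noteq> []" using len by auto
    then have "C = hd C # tl C" by simp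
    moreover have "tl C \<noteq> []" using len m by (cases C) auto
    then have "tl C = butlast (tl C) @ [last (tl C)]" by simp
    moreover have "last (tl C) = last C" using \<open>tl C \<noteq> []\<close> by (simp add: last_tl)
    ultimately show ?thesis using hd lastC us_def by metis
  qed
  have lus: "length us = m - 1" using len Ceq by simp
  have sub: "set us \<subseteq> {Suc h..n}"
  proof
    fix x assume x: "x \<in> set us"
    then obtain i where i: "i < length us" "us ! i = x" by (auto simp: in_set_conv_nth)
    have "C ! Suc i = x" using i Ceq by (simp add: nth_append)
    moreover have "0 < Suc i \<and> Suc i < length C - 1" using i Ceq by simp
    ultimately have "x \<noteq> h" using cl hd by (auto simp: is_clow_def)
    moreover have "x \<in> set C" using x Ceq by simp
    then have "x \<in> {1..n}" using cl by (auto simp: is_clow_def is_walk_def)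
    moreover have "h \<le> x"
    proof -
      have "hd C = Min (set (butlast C))" using cl by (simp add: is_clow_def)
      moreover have "x \<in> set (butlast C)" using x Ceq by simp
      ultimately show ?thesis using hd by (metis Min_le finite_set)
    qed
    ultimately show "x \<in> {Suc h..n}" by auto
  qed
  have "consec (\<lambda>a b. a \<noteq> b) C" using dist consec_walk[of C "\<lambda>a b. a \<noteq> b"] by simp
  moreover have "consec (is_edge A) C" using cl consec_walk[of C "is_edge A"]
    by (simp add: is_clow_def is_walk_def)
  ultimately have "consec (\<lambda>a b. BA A a b \<noteq> 0) C"
    by (simp add: BA_nz consec_conj)
  then have "pw (BA A) C \<noteq> 0" by (simp add: pw_nz)
  then show "\<exists>us. C = h # us @ [h] \<and> set us \<subseteq> {Suc h..n} \<and> length us = m - 1 \<and> pw (BA A) C \<noteq> 0"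
    using Ceq sub lus by blast
next
  assume "\<exists>us. C = h # us @ [h] \<and> set us \<subseteq> {Suc h..n} \<and> length us = m - 1 \<and> pw (BA A) C \<noteq> 0"
  then obtain us where Ceq: "C = h # us @ [h]" and sub: "set us \<subseteq> {Suc h..n}"
    and lus: "length us = m - 1" and nz: "pw (BA A) C \<noteq> 0" by blast
  have cc: "consec (\<lambda>a b. a \<noteq> b) C" "consec (is_edge A) C"
    using nz by (simp_all add: pw_nz BA_nz consec_conj)
  have setC: "set C \<subseteq> {1..n}" using Ceq sub h1 hn by auto
  have minC: "hd C = Min (set (butlast C))"
  proof -
    have "set (butlast C) = insert h (set us)" using Ceq by (simp add: butlast_append)
    moreover have "Min (insert h (set us)) = h"
      by (rule Min_eqI) (use sub in auto)
    ultimately show ?thesis using Ceq by simp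
  qed
  have nth: "\<forall>j. 0 < j \<and> j < length C - 1 \<longrightarrow> C ! j \<noteq> hd C"
  proof (intro allI impI)
    fix j assume j: "0 < j \<and> j < length C - 1"
    then have "C ! j = us ! (j - 1)" using Ceq by (cases j) (auto simp: nth_append)
    moreover have "us ! (j - 1) \<in> set us" using j Ceq by (intro nth_mem) auto
    ultimately show "C ! j \<noteq> hd C" using sub Ceq by auto
  qed
  have "is_clow n A C"
    unfolding is_clow_def is_walk_def
    using setC minC nth cc(2) consec_walk[of C "is_edge A"] Ceq by auto
  moreover have "num_edges C = m" using Ceq lus m by (simp add: num_edges_len)
  moreover have "\<forall>(a, b) \<in> set (walk_edges C). a \<noteq> b" using cc(1) consec_walk[of C "\<lambda>a b. a \<noteq> b"] by simp
  ultimately show "C \<in> clows_at n A h m" using m Ceq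
    by (simp add: clows_at_def goodc_def head_def)
qed

lemma pw_BA_eq: "pw (BA A) C \<noteq> 0 \<Longrightarrow> pw A C = pw (BA A) C"
proof -
  assume "pw (BA A) C \<noteq> 0"
  then have "consec (\<lambda>a b. a \<noteq> b) C" by (simp add: pw_nz BA_nz consec_conj)
  then have "consec (\<lambda>a b. A a b = BA A a b) C" by (rule consec_mono) (simp add: BA_def)
  then show ?thesis by (rule pw_cong)
qed

lemma clow_sum:
  assumes h1: "1 \<le> h" and hn: "h \<le> n" and m: "2 \<le> m"
  shows "(\<Sum>C\<in>clows_at n A h m. pw A C) =
    (\<Sum>j\<in>{Suc h..n}. A h j * Wk {Suc h..n} (BA A) (\<lambda>i. A i h) (m - 2) j)"
proof -
  define U where "U = {Suc h..n}"
  define L where "L p = {vs. set vs \<subseteq> U \<and> length vs = p}" for p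
  have finU: "finite U" by (simp add: U_def)
  have finL: "finite (L p)" for p unfolding L_def using finite_lists_eq[OF finU] .
  have "(\<Sum>j\<in>U. A h j * Wk U (BA A) (\<lambda>i. A i h) (m - 2) j) =
     (\<Sum>j\<in>U. \<Sum>vs\<in>L (m - 2). pw (BA A) (h # (j # vs) @ [h]))"
  proof (rule sum.cong[OF refl])
    fix j assume j: "j \<in> U"
    show "A h j * Wk U (BA A) (\<lambda>i. A i h) (m - 2) j = (\<Sum>vs\<in>L (m - 2). pw (BA A) (h # (j # vs) @ [h]))"
      unfolding Wk_lists[OF finU] sum_distrib_left L_def
    proof (rule sum.cong[OF refl])
      fix vs assume vs: "vs \<in> {vs. set vs \<subseteq> U \<and> length vs = m - 2}"
      have "last (j # vs) \<in> U" using vs j by (cases vs) auto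
      then have "BA A (last (j # vs)) h = A (last (j # vs)) h" by (auto simp: BA_def U_def)
      moreover have "BA A h j = A h j" using j by (auto simp: BA_def U_def)
      ultimately show "A h j * (pw (BA A) (j # vs) * A (last (j # vs)) h) = pw (BA A) (h # (j # vs) @ [h])"
        using pw_snoc[of "BA A" "j # vs" h] by simp
    qed
  qed
  also have "\<dots> = (\<Sum>us\<in>L (m - 1). pw (BA A) (h # us @ [h]))"
  proof -
    have "m - 1 = Suc (m - 2)" using m by simp
    then show ?thesis unfolding L_def using sum_lists_Suc[OF finU, where p="m - 2" and g="\<lambda>us. pw (BA A) (h # us @ [h])"]
      by simp
  qed
  also have "\<dots> = (\<Sum>us\<in>{us \<in> L (m - 1). pw (BA A) (h # us @ [h]) \<noteq> 0}. pw (BA A) (h # us @ [h]))"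
    by (rule sum.mono_neutral_right) (use finL in auto)
  also have "\<dots> = (\<Sum>C\<in>clows_at n A h m. pw A C)"
  proof (rule sum.reindex_bij_witness[of _ "\<lambda>C. butlast (tl C)" "\<lambda>us. h # us @ [h]"])
    fix us assume "us \<in> {us \<in> L (m - 1). pw (BA A) (h # us @ [h]) \<noteq> 0}"
    then have us: "set us \<subseteq> U" "length us = m - 1" "pw (BA A) (h # us @ [h]) \<noteq> 0" by (auto simp: L_def)
    show "butlast (tl (h # us @ [h])) = us" by simp
    show "h # us @ [h] \<in> clows_at n A h m"
      unfolding clows_at_char[OF h1 hn m] using us by (auto simp: U_def)
    show "pw A (h # us @ [h]) = pw (BA A) (h # us @ [h])" using us(3) by (rule pw_BA_eq)
  next
    fix C assume "C \<in> clows_at n A h m"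
    then obtain us where Ceq: "C = h # us @ [h]" and sub: "set us \<subseteq> {Suc h..n}"
      and lus: "length us = m - 1" and nz: "pw (BA A) C \<noteq> 0"
      unfolding clows_at_char[OF h1 hn m] by blast
    show "h # butlast (tl C) @ [h] = C" using Ceq by simp
    show "butlast (tl C) \<in> {us \<in> L (m - 1). pw (BA A) (h # us @ [h]) \<noteq> 0}"
      using Ceq sub lus nz by (simp add: L_def U_def)
  qed
  finally show ?thesis unfolding U_def by simp
qed



lemma clow_seqs_alt: "clow_seqs n A k = {W. (\<forall>C\<in>set W. goodc n A C) \<and> sorted_wrt (<) (map head W) \<and> sum_list (map num_edges W) = k}"
  by (simp add: clow_seqs_def goodc_def)

lemma len_le_sum_list: "(\<forall>x\<in>set xs. 1 \<le> f x) \<Longrightarrow> length xs \<le> sum_list (map f xs)"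
  by (induction xs) auto

lemma goodc_len: "goodc n A C \<Longrightarrow> length C = Suc (num_edges C) \<and> set C \<subseteq> {1..n}"
  by (auto simp: goodc_def is_clow_def is_walk_def num_edges_len)

lemma finite_clow_seqs: "finite (clow_seqs n A k)"
proof -
  define X where "X = {C. set C \<subseteq> {1..n} \<and> length C \<le> Suc k}"
  have fX: "finite X" unfolding X_def by (rule finite_lists_length_le) simp
  have "clow_seqs n A k \<subseteq> {W. set W \<subseteq> X \<and> length W \<le> k}"
  proof
    fix W assume W: "W \<in> clow_seqs n A k"
    then have g: "\<forall>C\<in>set W. goodc n A C" and s: "sum_list (map num_edges W) = k"
      by (auto simp: clow_seqs_alt)
    have "set W \<subseteq> X"
    proof
      fix C assume C: "C \<in> set W"
      have "num_edges C \<le> k" using C s member_le_sum_list[of "num_edges C" "map num_edges W"] by auto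
      then show "C \<in> X" using goodc_len[of n A C] g C by (auto simp: X_def)
    qed
    moreover have "length W \<le> k"
      using len_le_sum_list[of W num_edges] g s by (force simp: goodc_def)
    ultimately show "W \<in> {W. set W \<subseteq> X \<and> length W \<le> k}" by simp
  qed
  moreover have "finite {W. set W \<subseteq> X \<and> length W \<le> k}" by (rule finite_lists_length_le[OF fX])
  ultimately show ?thesis by (rule finite_subset)
qed

definition CS :: "nat \<Rightarrow> (nat \<Rightarrow> nat \<Rightarrow> int) \<Rightarrow> nat \<Rightarrow> nat \<Rightarrow> nat list list set" where
  "CS n A h k = {W \<in> clow_seqs n A k. \<forall>C\<in>set W. h \<le> head C}"

definition sw :: "(nat \<Rightarrow> nat \<Rightarrow> int) \<Rightarrow> nat \<Rightarrow> nat list list \<Rightarrow> int" where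
  "sw A k W = (-1)^(k + length W) * clow_seq_wt A W"

definition gsum :: "nat \<Rightarrow> (nat \<Rightarrow> nat \<Rightarrow> int) \<Rightarrow> nat \<Rightarrow> nat \<Rightarrow> int" where
  "gsum n A h k = (\<Sum>W\<in>CS n A h k. sw A k W)"

definition csum :: "nat \<Rightarrow> (nat \<Rightarrow> nat \<Rightarrow> int) \<Rightarrow> nat \<Rightarrow> nat \<Rightarrow> int" where
  "csum n A h m = (\<Sum>C\<in>clows_at n A h m. pw A C)"

lemma finite_CS: "finite (CS n A h k)"
  unfolding CS_def using finite_clow_seqs by simp

lemma head_range: "goodc n A C \<Longrightarrow> head C \<in> {1..n}"
proof -
  assume "goodc n A C"
  then have "C \<noteq> []" "set C \<subseteq> {1..n}" by (auto simp: goodc_def is_clow_def is_walk_def)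
  then have "hd C \<in> set C" by simp
  then show ?thesis using \<open>set C \<subseteq> {1..n}\<close> by (auto simp: head_def)
qed

lemma CS_1: "CS n A 1 k = clow_seqs n A k"
  unfolding CS_def using head_range by (fastforce simp: clow_seqs_alt)

lemma CS_top: "CS n A (Suc n) k = (if k = 0 then {[]} else {})"
proof -
  have "W \<in> CS n A (Suc n) k \<longleftrightarrow> W = [] \<and> k = 0" for W
  proof
    assume W: "W \<in> CS n A (Suc n) k"
    have "W = []"
    proof (rule ccontr)
      assume "W \<noteq> []"
      then obtain C where C: "C \<in> set W" by (cases W) auto
      then have "head C \<in> {1..n}" using W head_range by (auto simp: CS_def clow_seqs_alt)
      moreover have "Suc n \<le> head C" using W C by (auto simp: CS_def)
      ultimately show False by simp
    qed
    then show "W = [] \<and> k = 0" using W by (simp add: CS_def clow_seqs_alt)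
  next
    assume "W = [] \<and> k = 0" then show "W \<in> CS n A (Suc n) k" by (simp add: CS_def clow_seqs_alt)
  qed
  then show ?thesis by auto
qed

lemma gsum_top: "gsum n A (Suc n) k = (if k = 0 then 1 else 0)"
  by (simp add: gsum_def CS_top sw_def clow_seq_wt_def)

lemma finite_clows_at: "finite (clows_at n A h m)"
proof -
  have "clows_at n A h m \<subseteq> {C. set C \<subseteq> {1..n} \<and> length C \<le> Suc m}"
    using goodc_len by (auto simp: clows_at_def)
  moreover have "finite {C. set C \<subseteq> {1..n} \<and> length C \<le> Suc m}"
    by (rule finite_lists_length_le) simp
  ultimately show ?thesis by (rule finite_subset)
qed

lemma CS_diff_char:
  "W \<in> CS n A h k - CS n A (Suc h) k \<longleftrightarrow>
    (\<exists>C W'. W = C # W' \<and> num_edges C \<le> k \<and> C \<in> clows_at n A h (num_edges C) \<and>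
       W' \<in> CS n A (Suc h) (k - num_edges C))"
proof
  assume W: "W \<in> CS n A h k - CS n A (Suc h) k"
  then have g: "\<forall>C\<in>set W. goodc n A C" and s: "sorted_wrt (<) (map head W)"
    and sl: "sum_list (map num_edges W) = k" and hh: "\<forall>C\<in>set W. h \<le> head C"
    by (auto simp: CS_def clow_seqs_alt)
  obtain C0 where C0: "C0 \<in> set W" "\<not> Suc h \<le> head C0" using W by (auto simp: CS_def)
  then obtain C W' where Weq: "W = C # W'" by (cases W) auto
  have sW': "\<forall>D\<in>set W'. head C < head D" and sW'2: "sorted_wrt (<) (map head W')"
    using s Weq by auto
  have hC: "head C = h"
  proof (cases "C0 = C")
    case True then show ?thesis using C0 hh Weq by force
  next
    case False
    then have "C0 \<in> set W'" using C0 Weq by simp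
    then have "head C < head C0" using sW' by blast
    then show ?thesis using C0 hh Weq by force
  qed
  have "num_edges C \<le> k" using sl Weq by simp
  moreover have "C \<in> clows_at n A h (num_edges C)" using g Weq hC by (simp add: clows_at_def)
  moreover have "W' \<in> CS n A (Suc h) (k - num_edges C)"
    using g sW' sW'2 sl hC Weq by (auto simp: CS_def clow_seqs_alt Suc_le_eq)
  ultimately show "\<exists>C W'. W = C # W' \<and> num_edges C \<le> k \<and> C \<in> clows_at n A h (num_edges C) \<and>
       W' \<in> CS n A (Suc h) (k - num_edges C)" using Weq by blast
next
  assume "\<exists>C W'. W = C # W' \<and> num_edges C \<le> k \<and> C \<in> clows_at n A h (num_edges C) \<and>
       W' \<in> CS n A (Suc h) (k - num_edges C)"
  then obtain C W' where Weq: "W = C # W'" and le: "num_edges C \<le> k"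
    and C: "C \<in> clows_at n A h (num_edges C)" and W': "W' \<in> CS n A (Suc h) (k - num_edges C)" by blast
  have gC: "goodc n A C" and hC: "head C = h" using C by (auto simp: clows_at_def)
  have g: "\<forall>D\<in>set W'. goodc n A D" and s: "sorted_wrt (<) (map head W')"
    and sl: "sum_list (map num_edges W') = k - num_edges C" and hh: "\<forall>D\<in>set W'. Suc h \<le> head D"
    using W' by (auto simp: CS_def clow_seqs_alt)
  have "W \<in> CS n A h k"
    using gC hC g s sl hh le Weq by (auto simp: CS_def clow_seqs_alt Suc_le_eq)
  moreover have "W \<notin> CS n A (Suc h) k" using hC Weq by (auto simp: CS_def)
  ultimately show "W \<in> CS n A h k - CS n A (Suc h) k" by simp
qed

lemma gsum_step:
  "gsum n A h k = gsum n A (Suc h) k - (\<Sum>m\<in>{..k}. (-1)^m * csum n A h m * gsum n A (Suc h) (k - m))"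
proof -
  have sub: "CS n A (Suc h) k \<subseteq> CS n A h k" by (auto simp: CS_def)
  have "gsum n A h k = (\<Sum>W\<in>CS n A h k - CS n A (Suc h) k. sw A k W) + gsum n A (Suc h) k"
    unfolding gsum_def by (rule sum.subset_diff[OF sub finite_CS])
  also have "(\<Sum>W\<in>CS n A h k - CS n A (Suc h) k. sw A k W) =
     (\<Sum>x\<in>Sigma {..k} (\<lambda>m. clows_at n A h m \<times> CS n A (Suc h) (k - m)). sw A k (fst (snd x) # snd (snd x)))"
  proof (rule sum.reindex_bij_witness[of _ "\<lambda>x. fst (snd x) # snd (snd x)" "\<lambda>W. (num_edges (hd W), hd W, tl W)"])
    fix W assume W: "W \<in> CS n A h k - CS n A (Suc h) k"
    then obtain C W' where Weq: "W = C # W'" and le: "num_edges C \<le> k"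
      and C: "C \<in> clows_at n A h (num_edges C)" and W': "W' \<in> CS n A (Suc h) (k - num_edges C)"
      unfolding CS_diff_char by blast
    show "fst (snd (num_edges (hd W), hd W, tl W)) # snd (snd (num_edges (hd W), hd W, tl W)) = W"
      using Weq by simp
    show "(num_edges (hd W), hd W, tl W) \<in> Sigma {..k} (\<lambda>m. clows_at n A h m \<times> CS n A (Suc h) (k - m))"
      using Weq le C W' by simp
    show "sw A k (fst (snd (num_edges (hd W), hd W, tl W)) # snd (snd (num_edges (hd W), hd W, tl W))) = sw A k W"
      using Weq by simp
  next
    fix x assume x: "x \<in> Sigma {..k} (\<lambda>m. clows_at n A h m \<times> CS n A (Suc h) (k - m))"
    then obtain m C W' where xeq: "x = (m, C, W')" and m: "m \<le> k" and C: "C \<in> clows_at n A h m"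
      and W': "W' \<in> CS n A (Suc h) (k - m)" by auto
    have ne: "num_edges C = m" using C by (simp add: clows_at_def)
    show "(num_edges (hd (fst (snd x) # snd (snd x))), hd (fst (snd x) # snd (snd x)), tl (fst (snd x) # snd (snd x))) = x"
      using xeq ne by simp
    show "fst (snd x) # snd (snd x) \<in> CS n A h k - CS n A (Suc h) k"
      unfolding CS_diff_char using xeq ne m C W' by auto
  qed
  also have "\<dots> = (\<Sum>m\<in>{..k}. \<Sum>C\<in>clows_at n A h m. \<Sum>W'\<in>CS n A (Suc h) (k - m). sw A k (C # W'))"
  proof -
    have "(\<Sum>m\<in>{..k}. \<Sum>y\<in>clows_at n A h m \<times> CS n A (Suc h) (k - m). sw A k (fst y # snd y)) =
      (\<Sum>x\<in>Sigma {..k} (\<lambda>m. clows_at n A h m \<times> CS n A (Suc h) (k - m)). sw A k (fst (snd x) # snd (snd x)))"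
      by (subst sum.Sigma) (simp_all add: finite_clows_at finite_CS split_def)
    then show ?thesis by (simp add: sum.cartesian_product split_def)
  qed
  also have "\<dots> = (\<Sum>m\<in>{..k}. \<Sum>C\<in>clows_at n A h m. \<Sum>W'\<in>CS n A (Suc h) (k - m).
      - ((-1)^m * pw A C * sw A (k - m) W'))"
  proof (intro sum.cong refl)
    fix m C and W' :: "nat list list" assume m: "m \<in> {..k}" and C: "C \<in> clows_at n A h m"
    have ne: "num_edges C = m" using C by (simp add: clows_at_def)
    have kk: "k + Suc (length W') = Suc (m + ((k - m) + length W'))" using m by simp
    show "sw A k (C # W') = - ((-1)^m * pw A C * sw A (k - m) W')"
    proof -
      have e: "(-1::int)^k = (-1)^m * (-1)^(k - m)" using m by (simp flip: power_add)
      show ?thesis unfolding sw_def clow_seq_wt_def kk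
        by (simp only: pw_walk power_add e power_Suc list.map prod_list.Cons length_Cons) (simp add: mult_ac)
    qed
  qed
  also have "\<dots> = - (\<Sum>m\<in>{..k}. (-1)^m * csum n A h m * gsum n A (Suc h) (k - m))"
    unfolding sum_negf[symmetric]
  proof (intro sum.cong refl)
    fix m
    have "(-1)^m * csum n A h m * gsum n A (Suc h) (k - m) =
      (-1)^m * (\<Sum>C\<in>clows_at n A h m. \<Sum>W'\<in>CS n A (Suc h) (k - m). pw A C * sw A (k - m) W')"
      unfolding csum_def gsum_def by (simp add: mult.assoc sum_product)
    then show "(\<Sum>C\<in>clows_at n A h m. \<Sum>W'\<in>CS n A (Suc h) (k - m). - ((-1)^m * pw A C * sw A (k - m) W')) =
       - ((-1)^m * csum n A h m * gsum n A (Suc h) (k - m))"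
      by (simp add: sum_negf sum_distrib_left mult.assoc)
  qed
  finally show ?thesis by simp
qed



definition Ffps :: "nat \<Rightarrow> (nat \<Rightarrow> nat \<Rightarrow> int) \<Rightarrow> nat \<Rightarrow> int fps" where
  "Ffps n A h = fps_X^2 * (\<Sum>j\<in>{Suc h..n}. fps_const (A h j) *
      Abs_fps (\<lambda>p. (-1)^p * Wk {Suc h..n} (BA A) (\<lambda>i. A i h) p j))"

lemma F_nth:
  assumes h1: "1 \<le> h" and hn: "h \<le> n"
  shows "fps_nth (Ffps n A h) m = (-1)^m * csum n A h m"
proof (cases "m < 2")
  case True
  then have "clows_at n A h m = {}" by (auto simp: clows_at_def goodc_def)
  then show ?thesis using True by (simp add: Ffps_def fps_X_power_mult_nth csum_def)
next
  case False
  then have m: "2 \<le> m" by simp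
  have e: "(-1::int)^(m - 2) = (-1)^m"
  proof -
    obtain q where q: "m = q + 2" using m by (metis le_add_diff_inverse2)
    then show ?thesis by (simp add: power_add)
  qed
  show ?thesis
    unfolding csum_def clow_sum[OF h1 hn m]
    using False by (simp add: Ffps_def fps_X_power_mult_nth fps_sum_nth e sum_distrib_left mult_ac)
qed

lemma det_step:
  assumes h1: "1 \<le> h" and hn: "h \<le> n"
  shows "detU {h..n} (MA A) = detU {Suc h..n} (MA A) * (1 - Ffps n A h)"
proof -
  have ins: "{h..n} = insert h {Suc h..n}" using hn by auto
  define D where "D = detU {Suc h..n} (MA A)"
  have "detU {h..n} (MA A) = D - fps_X^2 * (\<Sum>j\<in>{Suc h..n}. fps_const (A h j) * Lf {Suc h..n} (MA A) (\<lambda>i. fps_const (A i h)) j)"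
    unfolding ins D_def by (rule det_insert) auto
  also have "(\<Sum>j\<in>{Suc h..n}. fps_const (A h j) * Lf {Suc h..n} (MA A) (\<lambda>i. fps_const (A i h)) j) =
     (\<Sum>j\<in>{Suc h..n}. fps_const (A h j) * (D * Abs_fps (\<lambda>p. (-1)^p * Wk {Suc h..n} (BA A) (\<lambda>i. A i h) p j)))"
    unfolding D_def by (intro sum.cong refl) (simp add: Lf_solution)
  finally show ?thesis unfolding Ffps_def D_def
    by (simp add: algebra_simps sum_distrib_left)
qed

lemma detU_empty: "detU {} M = 1"
  by (simp add: detU_def)

lemma main_eq:
  assumes h1: "1 \<le> h" and hn: "h \<le> Suc n"
  shows "Abs_fps (gsum n A h) = detU {h..n} (MA A)"
  using hn h1
proof (induction h rule: inc_induct)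
  case base
  show ?case by (intro fps_ext) (simp add: gsum_top detU_empty)
next
  case (step m)
  have m1: "1 \<le> m" and mn: "m \<le> n" using step by auto
  have "detU {m..n} (MA A) = (1 - Ffps n A m) * Abs_fps (gsum n A (Suc m))"
    using det_step[OF m1 mn] step.IH m1 by (simp add: mult.commute)
  also have "\<dots> = Abs_fps (gsum n A m)"
  proof (intro fps_ext)
    fix k
    have "fps_nth ((1 - Ffps n A m) * Abs_fps (gsum n A (Suc m))) k =
       gsum n A (Suc m) k - fps_nth (Ffps n A m * Abs_fps (gsum n A (Suc m))) k"
      by (simp add: left_diff_distrib)
    also have "fps_nth (Ffps n A m * Abs_fps (gsum n A (Suc m))) k =
       (\<Sum>i\<in>{..k}. (-1)^i * csum n A m i * gsum n A (Suc m) (k - i))"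
      by (simp add: fps_mult_nth F_nth[OF m1 mn] atLeast0AtMost)
    finally show "fps_nth ((1 - Ffps n A m) * Abs_fps (gsum n A (Suc m))) k = fps_nth (Abs_fps (gsum n A m)) k"
      using gsum_step[of n A m k] by simp
  qed
  finally show ?case by simp
qed



lemma fps_const_prod_int: "finite S \<Longrightarrow> (\<Prod>x\<in>S. fps_const (a x :: int)) = fps_const (\<Prod>x\<in>S. a x)"
  by (induction S rule: finite_induct) (simp_all add: fps_const_mult)

lemma prod_MA:
  assumes s: "\<sigma> permutes {1..n}"
  shows "(\<Prod>x\<in>{1..n}. MA A x (\<sigma> x)) =
    fps_const (\<Prod>i\<in>{i \<in> {1..n}. \<sigma> i \<noteq> i}. A i (\<sigma> i)) * fps_X ^ card {i \<in> {1..n}. \<sigma> i \<noteq> i}"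
proof -
  let ?Mv = "{i \<in> {1..n}. \<sigma> i \<noteq> i}"
  have "(\<Prod>x\<in>{1..n}. MA A x (\<sigma> x)) = (\<Prod>x\<in>?Mv. MA A x (\<sigma> x))"
    by (rule prod.mono_neutral_right) (auto simp: MA_def)
  also have "\<dots> = (\<Prod>x\<in>?Mv. fps_const (A x (\<sigma> x)) * fps_X)"
    by (rule prod.cong) (auto simp: MA_def)
  also have "\<dots> = fps_const (\<Prod>i\<in>?Mv. A i (\<sigma> i)) * fps_X ^ card ?Mv"
    by (simp add: prod.distrib fps_const_prod_int)
  finally show ?thesis .
qed

lemma pdet_eq: "pdet n A k = fps_nth (detU {1..n} (MA A)) k"
proof -
  let ?P = "{\<sigma>. \<sigma> permutes {1..n}}"
  have "fps_nth (detU {1..n} (MA A)) k =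
    (\<Sum>\<sigma>\<in>?P. if card {i \<in> {1..n}. \<sigma> i \<noteq> i} = k then sign \<sigma> * (\<Prod>i\<in>{i \<in> {1..n}. \<sigma> i \<noteq> i}. A i (\<sigma> i)) else 0)"
    unfolding detU_def fps_sum_nth
  proof (intro sum.cong refl)
    fix \<sigma> assume "\<sigma> \<in> ?P"
    then have s: "\<sigma> permutes {1..n}" by simp
    have oi: "(of_int (sign \<sigma>) :: int fps) = fps_const (sign \<sigma>)" by (cases "\<sigma>" rule: sign_cases) (simp_all add: fps_const_neg[symmetric])
    show "fps_nth (of_int (sign \<sigma>) * (\<Prod>x\<in>{1..n}. MA A x (\<sigma> x))) k =
      (if card {i \<in> {1..n}. \<sigma> i \<noteq> i} = k then sign \<sigma> * (\<Prod>i\<in>{i \<in> {1..n}. \<sigma> i \<noteq> i}. A i (\<sigma> i)) else 0)"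
      unfolding prod_MA[OF s] oi mult.assoc[symmetric] fps_const_mult
      by (simp add: fps_X_power_mult_right_nth)
  qed
  also have "\<dots> = (\<Sum>\<sigma>\<in>{\<sigma>\<in>?P. card {i \<in> {1..n}. \<sigma> i \<noteq> i} = k}. sign \<sigma> * (\<Prod>i\<in>{i \<in> {1..n}. \<sigma> i \<noteq> i}. A i (\<sigma> i)))"
    by (rule sum.inter_filter[symmetric]) (simp add: finite_permutations)
  also have "{\<sigma>\<in>?P. card {i \<in> {1..n}. \<sigma> i \<noteq> i} = k} = S_nk n k"
    by (simp add: S_nk_def)
  finally show ?thesis by (simp add: pdet_def)
qed

lemma sign_eq: "clow_seq_sign n k W = (-1)^(k + length W)"
proof -
  have "even (2 * int n - int k + int (length W)) \<longleftrightarrow> even (k + length W)"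
    by presburger
  then show ?thesis by (simp add: clow_seq_sign_def)
qed

theorem lemma28:
  fixes n k :: nat and A :: "nat \<Rightarrow> nat \<Rightarrow> int"
  assumes "n > 0"
    and "\<forall>i \<in> {1..n}. \<forall>j \<in> {1..n}. A i j \<in> {0, 1}"
  shows "pdet n A k = (\<Sum>W \<in> clow_seqs n A k. clow_seq_sign n k W * clow_seq_wt A W)"
proof -
  have "pdet n A k = fps_nth (detU {1..n} (MA A)) k" by (rule pdet_eq)
  also have "detU {1..n} (MA A) = Abs_fps (gsum n A 1)" by (rule main_eq[symmetric]) auto
  also have "fps_nth (Abs_fps (gsum n A 1)) k = (\<Sum>W \<in> clow_seqs n A k. sw A k W)"
    using CS_1[of n A k] by (simp add: gsum_def)
  also have "\<dots> = (\<Sum>W \<in> clow_seqs n A k. clow_seq_sign n k W * clow_seq_wt A W)"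
    by (simp add: sw_def sign_eq)
  finally show ?thesis .
qed


end
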